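(* Let $(M,J,g,\nabla)$ be an affine special $\epsilon$-K\"ahler manifold of real dimension $2n$, let $U\subset M$ be a connected open subset and $\phi:U\to V=\mathbb{C}_\epsilon^{2n}$ an $\epsilon$-K\"ahlerian Lagrangian immersion inducing the special geometric data on $U$, such that $\tilde z^i=z^i\circ\phi$, $i=1,\dots,n$, form a system of holomorphic coordinates on $U$ (special holomorphic coordinates) with image $\tilde U\subset\mathbb{C}_\epsilon^n$, and let $F:\tilde U\to\mathbb{C}_\epsilon$ be a holomorphic prepotential, i.e. $\phi(U)=\{(z,w)\in\mathbb{C}_\epsilon^{2n}: z\in\tilde U,\ w_i=\partial F/\partial z^i(z),\ i=1,\dots,n\}$ ($F$ is determined up to an additive constant). Then $F$ can be chosen homogeneous of degree $2$ if and only if the special holomorphic coordinates are conical, i.e. if and only if $\phi$ is conical.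
   Context: Let $\epsilon\in\{-1,1\}$, $\mathbb{C}_\epsilon=\mathbb{R}[i_\epsilon]$, $i_\epsilon^2=\epsilon$, conjugation $\overline{a+i_\epsilon b}=a-i_\epsilon b$. An $\epsilon$-K\"ahler manifold $(M,J,g)$ is pseudo-Riemannian with parallel $g$-skew $J$, $J^2=\epsilon\mathrm{Id}$, K\"ahler form $\omega=\epsilon g(J\cdot,\cdot)$; affine special means there is a flat torsion-free $\nabla$ with $\nabla\omega=0$, $(\nabla_XJ)Y=(\nabla_YJ)X$. A function is ($\epsilon$-)holomorphic if $df\,J=i_\epsilon df$. On $V=\mathbb{C}_\epsilon^{2n}$ take coordinates $(z^i,w_i)$, $\Omega=\sum dz^i\wedge dw_i$, $\gamma=i_\epsilon\Omega(\cdot,\bar\cdot)$; a holomorphic immersion $\phi$ is $\epsilon$-K\"ahlerian if $\phi^*\gamma$ is nondegenerate, Lagrangian if $\phi^*\Omega=0$; it induces $g=\phi^*\mathrm{Re}\,\gamma$ and the flat connection $\nabla$ having $(\mathrm{Re}\,z^i\circ\phi,\mathrm{Re}\,w_i\circ\phi)$ as affine coordinates. $\phi$ is conical if the position vector field $\xi^V_p=p$ of $V$ is tangent along $\phi$, i.e. $\xi^V_{\phi(p)}\in d\phi_pT_pU$ for all $p$. A function $F$ on $\tilde U$ is homogeneous of degree $k$ if for every $z\in\tilde U$ there is a neighbourhood $W\subset\mathbb{C}_\epsilon$ of $1$ with $\lambda z\in\tilde U$ and $F(\lambda z)=\lambda^kF(z)$ for all $\lambda\in W$. *)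

theory Defs
  imports "HOL-Analysis.Analysis"
begin

text \<open>The epsilon-complex numbers C_eps = R[i_eps], i_eps^2 = eps, realised as real \<times> real
  (a, b) = a + i_eps b, with eps a real parameter (eps = 1 or eps = -1).\<close>

definition emul :: "real \<Rightarrow> real \<times> real \<Rightarrow> real \<times> real \<Rightarrow> real \<times> real" where
  "emul eps p q = (fst p * fst q + eps * snd p * snd q, fst p * snd q + snd p * fst q)"

definition iunit :: "real \<times> real" where
  "iunit = (0, 1)"

definition econj :: "real \<times> real \<Rightarrow> real \<times> real" where
  "econj p = (fst p, - snd p)"

primrec epow :: "real \<Rightarrow> real \<times> real \<Rightarrow> nat \<Rightarrow> real \<times> real" where
  "epow eps l 0 = (1, 0)"
| "epow eps l (Suc k) = emul eps l (epow eps l k)"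

definition escale :: "real \<Rightarrow> real \<times> real \<Rightarrow> (real \<times> real) ^ 'n \<Rightarrow> (real \<times> real) ^ 'n" where
  "escale eps l z = (\<chi> i. emul eps l (z $ i))"

definition eholo :: "real \<Rightarrow> ((real \<times> real) ^ 'n) set \<Rightarrow> ((real \<times> real) ^ 'n \<Rightarrow> real \<times> real) \<Rightarrow> bool" where
  "eholo eps U F \<longleftrightarrow> (\<forall>z\<in>U. \<exists>D. (F has_derivative D) (at z) \<and>
      (\<forall>h. D (escale eps iunit h) = emul eps iunit (D h)))"

definition epartial :: "((real \<times> real) ^ 'n \<Rightarrow> real \<times> real) \<Rightarrow> (real \<times> real) ^ 'n \<Rightarrow> 'n \<Rightarrow> real \<times> real" where
  "epartial F z i = frechet_derivative F (at z) (axis i (1, 0))"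

text \<open>V = C_eps^{2n} with coordinates (z^i, w_i); Omega = sum dz^i wedge dw_i,
  gamma = i_eps Omega(., conj .).\<close>
definition eOmega :: "real \<Rightarrow> ((real \<times> real) ^ 'n) \<times> ((real \<times> real) ^ 'n) \<Rightarrow>
    ((real \<times> real) ^ 'n) \<times> ((real \<times> real) ^ 'n) \<Rightarrow> real \<times> real" where
  "eOmega eps p q = (\<Sum>i\<in>UNIV. emul eps (fst p $ i) (snd q $ i) - emul eps (snd p $ i) (fst q $ i))"

definition econjV :: "((real \<times> real) ^ 'n) \<times> ((real \<times> real) ^ 'n) \<Rightarrow> ((real \<times> real) ^ 'n) \<times> ((real \<times> real) ^ 'n)" where
  "econjV p = ((\<chi> i. econj (fst p $ i)), (\<chi> i. econj (snd p $ i)))"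

definition egamma :: "real \<Rightarrow> ((real \<times> real) ^ 'n) \<times> ((real \<times> real) ^ 'n) \<Rightarrow>
    ((real \<times> real) ^ 'n) \<times> ((real \<times> real) ^ 'n) \<Rightarrow> real \<times> real" where
  "egamma eps p q = emul eps iunit (eOmega eps p (econjV q))"

text \<open>phi : U \<rightarrow> V is a holomorphic immersion (all coordinate functions holomorphic,
  injective differential), eps-Kaehlerian (pullback of gamma nondegenerate) and
  Lagrangian (pullback of Omega vanishes).\<close>
definition ekahler_lagrangian_imm :: "real \<Rightarrow> ((real \<times> real) ^ 'n) set \<Rightarrow>
    ((real \<times> real) ^ 'n \<Rightarrow> ((real \<times> real) ^ 'n) \<times> ((real \<times> real) ^ 'n)) \<Rightarrow> bool" where
  "ekahler_lagrangian_imm eps U phi \<longleftrightarrow>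
     (\<forall>i. eholo eps U (\<lambda>z. fst (phi z) $ i) \<and> eholo eps U (\<lambda>z. snd (phi z) $ i)) \<and>
     (\<forall>z\<in>U. \<exists>D. (phi has_derivative D) (at z) \<and> inj D \<and>
        (\<forall>X. (\<forall>Y. egamma eps (D X) (D Y) = 0) \<longrightarrow> X = 0) \<and>
        (\<forall>X Y. eOmega eps (D X) (D Y) = 0))"

text \<open>phi is conical: the position vector field of V is tangent along phi.\<close>
definition conical :: "((real \<times> real) ^ 'n) set \<Rightarrow>
    ((real \<times> real) ^ 'n \<Rightarrow> ((real \<times> real) ^ 'n) \<times> ((real \<times> real) ^ 'n)) \<Rightarrow> bool" where
  "conical U phi \<longleftrightarrow> (\<forall>z\<in>U. \<exists>D. (phi has_derivative D) (at z) \<and> phi z \<in> range D)"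

definition ehomogeneous :: "real \<Rightarrow> nat \<Rightarrow> ((real \<times> real) ^ 'n) set \<Rightarrow>
    ((real \<times> real) ^ 'n \<Rightarrow> real \<times> real) \<Rightarrow> bool" where
  "ehomogeneous eps k U F \<longleftrightarrow> (\<forall>z\<in>U. \<exists>W. open W \<and> (1, 0) \<in> W \<and>
      (\<forall>l\<in>W. escale eps l z \<in> U \<and> F (escale eps l z) = emul eps (epow eps l k) (F z)))"

end

theory Submission
  imports Defs
begin


lemma emul_comm: "emul e p q = emul e q p"
  by (simp add: emul_def prod_eq_iff algebra_simps)
lemma emul_assoc: "emul e (emul e p q) r = emul e p (emul e q r)"
  by (simp add: emul_def prod_eq_iff algebra_simps)
lemma emul_add_right: "emul e p (q + r) = emul e p q + emul e p r"
  by (simp add: emul_def prod_eq_iff algebra_simps)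
lemma emul_add_left: "emul e (q + r) p = emul e q p + emul e r p"
  by (simp add: emul_def prod_eq_iff algebra_simps)
lemma emul_diff_right: "emul e p (q - r) = emul e p q - emul e p r"
  by (simp add: emul_def prod_eq_iff algebra_simps)
lemma emul_diff_left: "emul e (q - r) p = emul e q p - emul e r p"
  by (simp add: emul_def prod_eq_iff algebra_simps)
lemma emul_scaleR_right: "emul e p (c *\<^sub>R q) = c *\<^sub>R emul e p q"
  by (simp add: emul_def prod_eq_iff algebra_simps)
lemma emul_scaleR_left: "emul e (c *\<^sub>R q) p = c *\<^sub>R emul e q p"
  by (simp add: emul_def prod_eq_iff algebra_simps)
lemma emul_one: "emul e (1,0) p = p"
  by (simp add: emul_def prod_eq_iff)
lemma emul_one_right: "emul e p (1,0) = p"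
  by (simp add: emul_def prod_eq_iff)
lemma emul_zero_right[simp]: "emul e p 0 = 0"
  by (simp add: emul_def prod_eq_iff)
lemma emul_zero_left[simp]: "emul e 0 p = 0"
  by (simp add: emul_def prod_eq_iff)
lemma emul_real: "emul e (c,0) p = c *\<^sub>R p"
  by (simp add: emul_def prod_eq_iff)
lemma emul_decomp: "emul e (a,b) q = a *\<^sub>R q + b *\<^sub>R emul e iunit q"
  by (simp add: emul_def prod_eq_iff iunit_def algebra_simps)
lemma emul_sum_right: "emul e p (sum f S) = (\<Sum>i\<in>S. emul e p (f i))"
  by (induction S rule: infinite_finite_induct) (auto simp: emul_add_right)
lemma emul_sum_left: "emul e (sum f S) p = (\<Sum>i\<in>S. emul e (f i) p)"
  by (induction S rule: infinite_finite_induct) (auto simp: emul_add_left)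

lemma bilinear_emul: "bilinear (emul e)"
  unfolding bilinear_def
  by (intro allI conjI linearI; rule emul_add_left emul_add_right emul_scaleR_left emul_scaleR_right)

lemma bb_emul: "bounded_bilinear (emul e)"
  using bilinear_emul bilinear_conv_bounded_bilinear by blast

lemma escale_nth[simp]: "escale e l z $ i = emul e l (z $ i)"
  by (simp add: escale_def)
lemma escale_real: "escale e (c,0) z = c *\<^sub>R z"
  by (simp add: vec_eq_iff emul_real)
lemma escale_decomp: "escale e (a,b) z = a *\<^sub>R z + b *\<^sub>R escale e iunit z"
  by (simp add: vec_eq_iff emul_decomp)
lemma escale_escale: "escale e l (escale e m z) = escale e (emul e l m) z"
  by (simp add: vec_eq_iff emul_assoc)
lemma escale_one: "escale e (1,0) z = z"
  by (simp add: vec_eq_iff emul_one)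

lemma linear_escale_l: "linear (\<lambda>l. escale e l z)"
  by (intro linearI; simp only: vec_eq_iff escale_nth vector_add_component vector_scaleR_component emul_add_left emul_scaleR_left; simp)
lemma bl_escale_l: "bounded_linear (\<lambda>l. escale e l z)"
  using linear_escale_l linear_conv_bounded_linear by blast

lemma linear_escale_r: "linear (\<lambda>z. escale e l z)"
  by (auto intro!: linearI simp: vec_eq_iff emul_add_right emul_scaleR_right)


lemma sum_axis_vec: "(\<Sum>i\<in>UNIV. axis i (h $ i)) = (h :: ('a::comm_monoid_add)^'n)"
  by (simp add: vec_eq_iff sum_component axis_def)

lemma sum_emul_axis: "(\<Sum>i\<in>UNIV. emul e (axis j c $ i) (p i)) = emul e c (p j)"
proof -
  have "emul e (axis j c $ i) (p i) = (if i = j then emul e c (p j) else 0)" for i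
    by (simp add: axis_def)
  thus ?thesis by simp
qed

lemma holo_linear_sum:
  fixes D :: "(real \<times> real)^'n \<Rightarrow> real \<times> real"
  assumes lin: "linear D" and hol: "\<And>h. D (escale e iunit h) = emul e iunit (D h)"
  shows "D h = (\<Sum>i\<in>UNIV. emul e (h $ i) (D (axis i (1,0))))"
proof -
  have ax: "axis i (a,b) = a *\<^sub>R axis i (1,0) + b *\<^sub>R escale e iunit (axis i (1,0))" for i and a b :: real
    by (simp add: vec_eq_iff axis_def emul_def iunit_def prod_eq_iff)
  have Dax: "D (axis i c) = emul e c (D (axis i (1,0)))" for i c
  proof (cases c)
    case (Pair a b)
    have "D (axis i (a,b)) = a *\<^sub>R D (axis i (1,0)) + b *\<^sub>R D (escale e iunit (axis i (1,0)))"
      by (subst ax) (simp only: linear_add[OF lin] linear_scale[OF lin])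
    thus ?thesis unfolding Pair by (simp add: hol emul_decomp)
  qed
  have "D h = (\<Sum>i\<in>UNIV. D (axis i (h $ i)))"
    using linear_sum[OF lin, of "\<lambda>i. axis i (h$i)" UNIV] sum_axis_vec[of h] by simp
  also have "\<dots> = (\<Sum>i\<in>UNIV. emul e (h $ i) (D (axis i (1,0))))"
    by (rule sum.cong[OF refl], rule Dax)
  finally show ?thesis .
qed

lemma holo_linear_vec:
  fixes A :: "(real \<times> real)^'n \<Rightarrow> (real \<times> real)^'m"
  assumes lin: "linear A" and hol: "\<And>h. A (escale e iunit h) = escale e iunit (A h)"
  shows "A (escale e l h) = escale e l (A h)"
proof (cases l)
  case (Pair a b)
  show ?thesis unfolding Pair escale_decomp
    by (simp add: linear_add[OF lin] linear_scale[OF lin] hol)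
qed

definition einv :: "real \<Rightarrow> real \<times> real \<Rightarrow> real \<times> real" where
  "einv e l = (fst l / ((fst l)^2 - e * (snd l)^2), - snd l / ((fst l)^2 - e * (snd l)^2))"

lemma emul_einv: "(fst l)^2 - e * (snd l)^2 \<noteq> 0 \<Longrightarrow> emul e l (einv e l) = (1,0)"
proof -
  assume N: "(fst l)^2 - e * (snd l)^2 \<noteq> 0"
  have "fst l * fst l / ((fst l)^2 - e * (snd l)^2) - e * snd l * snd l / ((fst l)^2 - e * (snd l)^2) = 1"
    using N by (simp add: diff_divide_distrib[symmetric] power2_eq_square mult.assoc)
  thus ?thesis by (simp add: einv_def emul_def prod_eq_iff)
qed

lemma einv_one: "einv e (1,0) = (1,0)"
  by (simp add: einv_def)

lemma einv_der: "(fst l)^2 - e * (snd l)^2 \<noteq> 0 \<Longrightarrow> \<exists>E. (einv e has_derivative E) (at l)"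
proof -
  assume N: "(fst l)^2 - e * (snd l)^2 \<noteq> 0"
  have d: "((\<lambda>l. (fst l)^2 - e * (snd l)^2) has_derivative (\<lambda>h. 2 * fst l * fst h - e * (2 * snd l * snd h))) (at l)"
    by (intro derivative_eq_intros refl) (auto simp: algebra_simps)
  show ?thesis
    unfolding einv_def
    using has_derivative_Pair[OF has_derivative_divide[OF has_derivative_fst[OF has_derivative_ident] d N]
       has_derivative_divide[OF has_derivative_minus[OF has_derivative_snd[OF has_derivative_ident]] d N]]
    by blast
qed

lemma bilinear_escale: "bilinear (escale e)"
  unfolding bilinear_def using linear_escale_l linear_escale_r by blast

lemma bb_escale: "bounded_bilinear (escale e :: real \<times> real \<Rightarrow> (real \<times> real)^'n \<Rightarrow> _)"
  using bilinear_escale bilinear_conv_bounded_bilinear by blast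


lemma P_der:
  fixes phi :: "(real \<times> real) ^ 'n \<Rightarrow> ((real \<times> real) ^ 'n) \<times> ((real \<times> real) ^ 'n)"
  assumes U: "open U" and phi_def: "\<And>w. w \<in> U \<Longrightarrow> phi w = (w, P w)"
    and phi: "ekahler_lagrangian_imm e U phi" and z: "z \<in> U"
  shows "\<exists>A. (P has_derivative A) (at z) \<and> linear A \<and>
     (\<forall>x. A (escale e iunit x) = escale e iunit (A x)) \<and>
     (\<forall>X Y. (\<Sum>i\<in>UNIV. emul e (X$i) (A Y$i) - emul e (A X$i) (Y$i)) = 0) \<and>
     (phi has_derivative (\<lambda>h. (h, A h))) (at z)"
proof -
  obtain D where dD: "(phi has_derivative D) (at z)" and Om: "\<forall>X Y. eOmega e (D X) (D Y) = 0"
    using phi z unfolding ekahler_lagrangian_imm_def by blast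
  have f1: "((\<lambda>w. fst (phi w)) has_derivative (\<lambda>h. fst (D h))) (at z)"
    using has_derivative_fst[OF dD] .
  have "((\<lambda>w. w) has_derivative (\<lambda>h. fst (D h))) (at z)"
    by (rule has_derivative_transform_within_open[OF f1 U z]) (simp add: phi_def)
  hence fstD: "(\<lambda>h. fst (D h)) = (\<lambda>h. h)"
    using has_derivative_unique has_derivative_ident by blast
  define A where "A = (\<lambda>h. snd (D h))"
  have s1: "((\<lambda>w. snd (phi w)) has_derivative A) (at z)"
    unfolding A_def using has_derivative_snd[OF dD] .
  have dA: "(P has_derivative A) (at z)"
    by (rule has_derivative_transform_within_open[OF s1 U z]) (simp add: phi_def)
  have Deq: "D = (\<lambda>h. (h, A h))"
  proof
    fix h show "D h = (h, A h)" using fun_cong[OF fstD, of h] unfolding A_def by (metis prod.collapse)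
  qed
  have lin: "linear A" using has_derivative_linear[OF dA] .
  have hol: "A (escale e iunit x) = escale e iunit (A x)" for x
  proof -
    have "A (escale e iunit x) $ i = emul e iunit (A x $ i)" for i
    proof -
      obtain Di where d1: "((\<lambda>w. snd (phi w) $ i) has_derivative Di) (at z)"
        and h1: "\<forall>h. Di (escale e iunit h) = emul e iunit (Di h)"
        using phi z unfolding ekahler_lagrangian_imm_def eholo_def by blast
      have d2: "((\<lambda>w. snd (phi w) $ i) has_derivative (\<lambda>h. A h $ i)) (at z)"
        using bounded_linear.has_derivative[OF bounded_linear_vec_nth s1] .
      have "Di = (\<lambda>h. A h $ i)" using has_derivative_unique[OF d1 d2] .
      thus ?thesis using h1 by simp
    qed
    thus ?thesis by (simp add: vec_eq_iff)
  qed
  have sym: "(\<Sum>i\<in>UNIV. emul e (X$i) (A Y$i) - emul e (A X$i) (Y$i)) = 0" for X Y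
    using Om unfolding eOmega_def Deq by simp
  show ?thesis using dA lin hol sym dD unfolding Deq by blast
qed


lemma Q_der:
  fixes P :: "(real \<times> real) ^ 'n \<Rightarrow> (real \<times> real) ^ 'n"
  assumes "(P has_derivative A) (at z)"
  shows "((\<lambda>w. \<Sum>i\<in>UNIV. emul e (w$i) (P w$i)) has_derivative
          (\<lambda>h. \<Sum>i\<in>UNIV. emul e (z$i) (A h$i) + emul e (h$i) (P z$i))) (at z)"
proof (rule has_derivative_sum)
  fix i
  have a: "((\<lambda>w. w $ i) has_derivative (\<lambda>h. h $ i)) (at z)"
    using bounded_linear.has_derivative[OF bounded_linear_vec_nth has_derivative_ident] .
  have b: "((\<lambda>w. P w $ i) has_derivative (\<lambda>h. A h $ i)) (at z)"
    using bounded_linear.has_derivative[OF bounded_linear_vec_nth assms] .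
  show "((\<lambda>w. emul e (w$i) (P w$i)) has_derivative (\<lambda>h. emul e (z$i) (A h$i) + emul e (h$i) (P z$i))) (at z)"
    using bounded_bilinear.FDERIV[OF bb_emul a b] .
qed

lemma sym_sum:
  assumes "(\<Sum>i\<in>UNIV. emul e (X$i) (A Y$i) - emul e (A X$i) (Y$i)) = 0"
  shows "(\<Sum>i\<in>UNIV. emul e (X$i) (A Y$i)) = (\<Sum>i\<in>UNIV. emul e (Y$i) (A X$i))"
  using assms by (simp add: sum_subtractf emul_comm)

lemma epow2: "epow e l 2 = emul e l l"
  by (simp add: numeral_2_eq_2 emul_one_right)


lemma euler:
  fixes G :: "(real \<times> real) ^ 'n \<Rightarrow> real \<times> real"
  assumes hom: "ehomogeneous e 2 U G" and w: "w \<in> U" and dG: "(G has_derivative DG) (at w)"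
  shows "DG w = 2 *\<^sub>R G w"
proof -
  obtain W where WW: "open W \<and> (1,0) \<in> W \<and> (\<forall>l\<in>W. escale e l w \<in> U \<and> G (escale e l w) = emul e (epow e l 2) (G w))"
    using hom[unfolded ehomogeneous_def, rule_format, OF w] by (rule exE)
  have W: "open W" "(1,0) \<in> W" using WW by auto
  have WG: "\<And>l. l \<in> W \<Longrightarrow> escale e l w \<in> U \<and> G (escale e l w) = emul e (epow e l 2) (G w)"
    using WW by auto
  define T where "T = (\<lambda>t::real. (1 + t, 0::real)) -` W"
  have T: "open T" unfolding T_def
    using W(1) by (rule continuous_open_vimage) (auto intro!: continuous_intros)
  have T0: "0 \<in> T" using W(2) by (simp add: T_def)
  have inner: "((\<lambda>t::real. (1 + t) *\<^sub>R w) has_derivative (\<lambda>s. s *\<^sub>R w)) (at 0)"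
    by (auto intro!: derivative_eq_intros)
  have g1: "((\<lambda>t::real. G ((1 + t) *\<^sub>R w)) has_derivative (\<lambda>s. DG (s *\<^sub>R w))) (at 0)"
  proof -
    have "(1 + (0::real)) *\<^sub>R w = w" by simp
    hence "(G has_derivative DG) (at ((1 + (0::real)) *\<^sub>R w))" using dG by simp
    from has_derivative_compose[OF inner this] show ?thesis .
  qed
  have g2: "((\<lambda>t::real. ((1 + t) * (1 + t)) *\<^sub>R G w) has_derivative (\<lambda>s. (2 * s) *\<^sub>R G w)) (at 0)"
    by (auto intro!: derivative_eq_intros simp: algebra_simps)
  have eq: "G ((1 + t) *\<^sub>R w) = ((1 + t) * (1 + t)) *\<^sub>R G w" if "t \<in> T" for t
  proof -
    have tW: "(1 + t, 0) \<in> W" using that by (simp add: T_def)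
    have e1: "emul e (epow e (1+t,0) 2) (G w) = ((1+t)*(1+t)) *\<^sub>R G w"
      unfolding epow2 by (simp add: emul_def prod_eq_iff algebra_simps)
    from WG[OF tW] show ?thesis unfolding escale_real e1 by blast
  qed
  have g1': "((\<lambda>t::real. ((1 + t) * (1 + t)) *\<^sub>R G w) has_derivative (\<lambda>s. DG (s *\<^sub>R w))) (at 0)"
    by (rule has_derivative_transform_within_open[OF g1 T T0]) (rule eq)
  have "(\<lambda>s. DG (s *\<^sub>R w)) = (\<lambda>s. (2 * s) *\<^sub>R G w)" using has_derivative_unique[OF g1' g2] .
  from fun_cong[OF this, of 1] show ?thesis by simp
qed


lemma sum_axis_one: "(\<Sum>i\<in>UNIV. emul e (axis j (1,0) $ i) (p i)) = p j"
  using sum_emul_axis[of e j "(1,0)" p] by (simp add: emul_one)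

lemma fwd:
  fixes phi :: "(real \<times> real) ^ 'n \<Rightarrow> ((real \<times> real) ^ 'n) \<times> ((real \<times> real) ^ 'n)"
    and G :: "(real \<times> real) ^ 'n \<Rightarrow> real \<times> real"
  assumes U: "open U" and phi_def: "\<And>w. w \<in> U \<Longrightarrow> phi w = (w, P w)"
    and phi: "ekahler_lagrangian_imm e U phi" and G: "eholo e U G"
    and dP: "\<forall>z\<in>U. \<forall>i. epartial G z i = P z $ i" and hom: "ehomogeneous e 2 U G"
  shows "conical U phi"
proof -
  have DGf: "\<exists>DG. (G has_derivative DG) (at w) \<and> (\<forall>h. DG h = (\<Sum>i\<in>UNIV. emul e (h$i) (P w$i)))"
    if w: "w \<in> U" for w
  proof -
    obtain DG where dG: "(G has_derivative DG) (at w)"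
      and hol: "\<forall>h. DG (escale e iunit h) = emul e iunit (DG h)"
      using G w unfolding eholo_def by blast
    have lin: "linear DG" using has_derivative_linear[OF dG] .
    have ax: "DG (axis i (1,0)) = P w $ i" for i
      using dP w frechet_derivative_at[OF dG] unfolding epartial_def by simp
    have "DG h = (\<Sum>i\<in>UNIV. emul e (h$i) (P w$i))" for h
      using holo_linear_sum[OF lin, of e h] hol ax by simp
    thus ?thesis using dG by blast
  qed
  have Qeq: "(\<Sum>i\<in>UNIV. emul e (w$i) (P w$i)) = 2 *\<^sub>R G w" if w: "w \<in> U" for w
  proof -
    obtain DG where dG: "(G has_derivative DG) (at w)"
      and DGh: "\<forall>h. DG h = (\<Sum>i\<in>UNIV. emul e (h$i) (P w$i))" using DGf[OF w] by blast
    show ?thesis using euler[OF hom w dG] DGh by simp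
  qed
  show ?thesis unfolding conical_def
  proof
    fix z assume z: "z \<in> U"
    obtain A where dA: "(P has_derivative A) (at z)" and lin: "linear A"
      and sym: "\<forall>X Y. (\<Sum>i\<in>UNIV. emul e (X$i) (A Y$i) - emul e (A X$i) (Y$i)) = 0"
      and dphi: "(phi has_derivative (\<lambda>h. (h, A h))) (at z)"
      using P_der[OF U phi_def phi z] by blast
    obtain DG where dG: "(G has_derivative DG) (at z)"
      and DGh: "\<forall>h. DG h = (\<Sum>i\<in>UNIV. emul e (h$i) (P z$i))" using DGf[OF z] by blast
    have d1: "((\<lambda>w. \<Sum>i\<in>UNIV. emul e (w$i) (P w$i)) has_derivative
          (\<lambda>h. \<Sum>i\<in>UNIV. emul e (z$i) (A h$i) + emul e (h$i) (P z$i))) (at z)"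
      using Q_der[OF dA] .
    have d2: "((\<lambda>w. 2 *\<^sub>R G w) has_derivative (\<lambda>h. 2 *\<^sub>R DG h)) (at z)"
      by (rule bounded_linear.has_derivative[OF bounded_linear_scaleR_right dG])
    have d1': "((\<lambda>w. 2 *\<^sub>R G w) has_derivative
          (\<lambda>h. \<Sum>i\<in>UNIV. emul e (z$i) (A h$i) + emul e (h$i) (P z$i))) (at z)"
      by (rule has_derivative_transform_within_open[OF d1 U z]) (rule Qeq)
    have eqf: "(\<lambda>h. \<Sum>i\<in>UNIV. emul e (z$i) (A h$i) + emul e (h$i) (P z$i)) = (\<lambda>h. 2 *\<^sub>R DG h)"
      using has_derivative_unique[OF d1' d2] .
    have "A z $ j = P z $ j" for j
    proof -
      define h where "h = (axis j (1,0) :: (real \<times> real)^'n)"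
      have s1: "(\<Sum>i\<in>UNIV. emul e (h$i) (P z$i)) = P z $ j"
        unfolding h_def by (rule sum_axis_one)
      have s2: "(\<Sum>i\<in>UNIV. emul e (h$i) (A z$i)) = A z $ j"
        unfolding h_def by (rule sum_axis_one)
      have "(\<Sum>i\<in>UNIV. emul e (z$i) (A h$i)) + (\<Sum>i\<in>UNIV. emul e (h$i) (P z$i)) = 2 *\<^sub>R DG h"
        using fun_cong[OF eqf, of h] by (simp add: sum.distrib)
      hence "(\<Sum>i\<in>UNIV. emul e (z$i) (A h$i)) + P z $ j = 2 *\<^sub>R P z $ j"
        using DGh s1 by simp
      hence "(\<Sum>i\<in>UNIV. emul e (z$i) (A h$i)) = P z $ j"
        by (simp add: scaleR_2)
      moreover have "(\<Sum>i\<in>UNIV. emul e (z$i) (A h$i)) = (\<Sum>i\<in>UNIV. emul e (h$i) (A z$i))"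
        using sym_sum[of e z A h] sym by blast
      ultimately show ?thesis using s2 by simp
    qed
    hence Az: "A z = P z" by (simp add: vec_eq_iff)
    show "\<exists>D. (phi has_derivative D) (at z) \<and> phi z \<in> range D"
      using dphi phi_def[OF z] Az by (intro exI[of _ "\<lambda>h. (h, A h)"]) auto
  qed
qed


lemma emul_swap: "emul e (emul e l z) (emul e l p) = emul e (emul e l l) (emul e z p)"
  by (simp add: emul_def prod_eq_iff algebra_simps)

lemma escale_add_l: "escale e (a + b) x = escale e a x + escale e b x"
  by (simp add: vec_eq_iff emul_add_left)

lemma escale_zero_l: "escale e 0 x = 0"
  by (simp add: vec_eq_iff)

lemma conv_A:
  fixes phi :: "(real \<times> real) ^ 'n \<Rightarrow> ((real \<times> real) ^ 'n) \<times> ((real \<times> real) ^ 'n)"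
  assumes U: "open U" and phi_def: "\<And>w. w \<in> U \<Longrightarrow> phi w = (w, P w)"
    and phi: "ekahler_lagrangian_imm e U phi" and con: "conical U phi" and z: "z \<in> U"
  shows "\<exists>A. (P has_derivative A) (at z) \<and> linear A \<and>
     (\<forall>x. A (escale e iunit x) = escale e iunit (A x)) \<and>
     (\<forall>X Y. (\<Sum>i\<in>UNIV. emul e (X$i) (A Y$i) - emul e (A X$i) (Y$i)) = 0) \<and> A z = P z"
proof -
  obtain A where dA: "(P has_derivative A) (at z)" and lin: "linear A"
      and hol: "\<forall>x. A (escale e iunit x) = escale e iunit (A x)"
      and sym: "\<forall>X Y. (\<Sum>i\<in>UNIV. emul e (X$i) (A Y$i) - emul e (A X$i) (Y$i)) = 0"
      and dphi: "(phi has_derivative (\<lambda>h. (h, A h))) (at z)"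
      using P_der[OF U phi_def phi z] by blast
  obtain D where dD: "(phi has_derivative D) (at z)" and r: "phi z \<in> range D"
    using con z unfolding conical_def by blast
  have "D = (\<lambda>h. (h, A h))" using has_derivative_unique[OF dD dphi] .
  then obtain x where "(z, P z) = (x, A x)" using r phi_def[OF z] by auto
  hence "A z = P z" by auto
  thus ?thesis using dA lin hol sym by blast
qed



lemma P_hom:
  fixes phi :: "(real \<times> real) ^ 'n \<Rightarrow> ((real \<times> real) ^ 'n) \<times> ((real \<times> real) ^ 'n)"
  assumes U: "open U" and phi_def: "\<And>w. w \<in> U \<Longrightarrow> phi w = (w, P w)"
    and phi: "ekahler_lagrangian_imm e U phi" and con: "conical U phi" and z: "z \<in> U"
  shows "\<exists>\<rho>>0. \<forall>l\<in>ball (1,0) \<rho>. escale e l z \<in> U \<and> P (escale e l z) = escale e l (P z)"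
proof -
  define Nf where "Nf = (\<lambda>l::real\<times>real. (fst l)^2 - e * (snd l)^2)"
  define S where "S = {l. escale e l z \<in> U \<and> Nf l \<noteq> 0}"
  have cont: "continuous (at l) (\<lambda>l. escale e l z)" for l
    using linear_continuous_at[OF bl_escale_l] .
  have o1: "open {l. escale e l z \<in> U}"
    using continuous_open_vimage[OF U cont] by (simp add: vimage_def)
  have o2: "open {l. Nf l \<noteq> 0}" unfolding Nf_def
    by (intro open_Collect_neq continuous_intros)
  have oS: "open S" unfolding S_def using open_Collect_conj[OF o1 o2] .
  have S1: "(1,0) \<in> S" unfolding S_def Nf_def using z by (simp add: escale_one)
  obtain \<rho> where rho: "\<rho> > 0" "ball (1,0) \<rho> \<subseteq> S"
    using oS S1 open_contains_ball by blast
  define h where "h = (\<lambda>l. P (escale e l z))"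
  define r where "r = (\<lambda>l. escale e (einv e l) (h l))"
  have oN: "open {l. Nf l \<noteq> 0}" using o2 .
  have der0: "(r has_derivative (\<lambda>\<delta>. 0)) (at l)" if l: "l \<in> S" for l
  proof -
    have lU: "escale e l z \<in> U" and Nl: "Nf l \<noteq> 0" using l by (auto simp: S_def)
    define w where "w = escale e l z"
    obtain A where dA: "(P has_derivative A) (at w)" and lin: "linear A"
      and hol: "\<forall>x. A (escale e iunit x) = escale e iunit (A x)" and Aw: "A w = P w"
      using conv_A[OF U phi_def phi con lU] unfolding w_def by blast
    have inner: "((\<lambda>l. escale e l z) has_derivative (\<lambda>\<delta>. escale e \<delta> z)) (at l)"
      using bounded_linear_imp_has_derivative[OF bl_escale_l] .
    have dh: "(h has_derivative (\<lambda>\<delta>. A (escale e \<delta> z))) (at l)"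
      unfolding h_def using has_derivative_compose[OF inner] dA unfolding w_def by blast
    obtain E where dE: "(einv e has_derivative E) (at l)"
      using einv_der[of l e] Nl unfolding Nf_def by blast
    have dr: "(r has_derivative (\<lambda>\<delta>. escale e (einv e l) (A (escale e \<delta> z)) + escale e (E \<delta>) (h l))) (at l)"
      unfolding r_def using bounded_bilinear.FDERIV[OF bb_escale dE dh] .
    have dI: "((\<lambda>m. emul e m (einv e m)) has_derivative (\<lambda>\<delta>. emul e l (E \<delta>) + emul e \<delta> (einv e l))) (at l)"
      using bounded_bilinear.FDERIV[OF bb_emul has_derivative_ident dE] .
    have dI': "((\<lambda>m. (1::real, 0::real)) has_derivative (\<lambda>\<delta>. emul e l (E \<delta>) + emul e \<delta> (einv e l))) (at l)"
      by (rule has_derivative_transform_within_open[OF dI oN]) (use Nl emul_einv in \<open>auto simp: Nf_def\<close>)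
    have Ez: "emul e l (E \<delta>) + emul e \<delta> (einv e l) = 0" for \<delta>
      using has_derivative_unique[OF dI' has_derivative_const] by meson
    have il: "emul e l (einv e l) = (1,0)" using emul_einv Nl unfolding Nf_def by blast
    have key: "A (escale e \<delta> z) = escale e (emul e \<delta> (einv e l)) (h l)" for \<delta>
    proof -
      have "escale e \<delta> z = escale e (emul e \<delta> (einv e l)) w"
        unfolding w_def escale_escale emul_assoc emul_comm[of e "einv e l" l] il emul_one_right ..
      hence "A (escale e \<delta> z) = escale e (emul e \<delta> (einv e l)) (A w)"
        using holo_linear_vec[OF lin] hol by simp
      thus ?thesis using Aw unfolding h_def w_def by simp
    qed
    have "escale e (einv e l) (A (escale e \<delta> z)) + escale e (E \<delta>) (h l) = 0" for \<delta>
    proof -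
      have "escale e (einv e l) (A (escale e \<delta> z)) + escale e (E \<delta>) (h l)
          = escale e (emul e (einv e l) (emul e \<delta> (einv e l)) + E \<delta>) (h l)"
        unfolding key escale_escale escale_add_l ..
      also have "emul e (einv e l) (emul e \<delta> (einv e l)) + E \<delta>
          = emul e (einv e l) (emul e l (E \<delta>) + emul e \<delta> (einv e l))"
        by (simp add: emul_add_right emul_assoc[symmetric] emul_comm[of e "einv e l" l] il emul_one add.commute)
      also have "\<dots> = 0" by (simp add: Ez)
      finally show ?thesis by (simp add: escale_zero_l)
    qed
    thus ?thesis using dr by simp
  qed
  have "\<exists>c. \<forall>l\<in>ball (1,0) \<rho>. r l = c"
    by (rule has_derivative_zero_constant[OF convex_ball])
       (use der0 rho(2) has_derivative_at_withinI in blast)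
  then obtain c where c: "\<And>l. l \<in> ball (1,0) \<rho> \<Longrightarrow> r l = c" by blast
  have c1: "c = P z" using c[of "(1,0)"] rho(1) by (simp add: r_def h_def einv_one escale_one)
  have "escale e l z \<in> U \<and> P (escale e l z) = escale e l (P z)" if l: "l \<in> ball (1,0) \<rho>" for l
  proof -
    have lS: "l \<in> S" using l rho(2) by blast
    hence Nl: "Nf l \<noteq> 0" and lU: "escale e l z \<in> U" by (auto simp: S_def)
    have il: "emul e l (einv e l) = (1,0)" using emul_einv Nl unfolding Nf_def by blast
    have "escale e l (r l) = h l" unfolding r_def escale_escale il escale_one ..
    thus ?thesis using c[OF l] c1 lU unfolding h_def by simp
  qed
  thus ?thesis using rho(1) by blast
qed


lemma bwd:
  fixes phi :: "(real \<times> real) ^ 'n \<Rightarrow> ((real \<times> real) ^ 'n) \<times> ((real \<times> real) ^ 'n)"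
  assumes U: "open U" and phi_def: "\<And>w. w \<in> U \<Longrightarrow> phi w = (w, P w)"
    and phi: "ekahler_lagrangian_imm e U phi" and con: "conical U phi"
  defines "G \<equiv> (\<lambda>w. (1/2::real) *\<^sub>R (\<Sum>i\<in>UNIV. emul e (w$i) (P w$i)))"
  shows "eholo e U G \<and> (\<forall>z\<in>U. \<forall>i. epartial G z i = P z $ i) \<and> ehomogeneous e 2 U G"
proof -
  have dG: "(G has_derivative (\<lambda>h. \<Sum>i\<in>UNIV. emul e (h$i) (P z$i))) (at z)" if z: "z \<in> U" for z
  proof -
    obtain A where dA: "(P has_derivative A) (at z)"
      and sym: "\<forall>X Y. (\<Sum>i\<in>UNIV. emul e (X$i) (A Y$i) - emul e (A X$i) (Y$i)) = 0"
      and Az: "A z = P z"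
      using conv_A[OF U phi_def phi con z] by blast
    have d: "(G has_derivative (\<lambda>h. (1/2::real) *\<^sub>R (\<Sum>i\<in>UNIV. emul e (z$i) (A h$i) + emul e (h$i) (P z$i)))) (at z)"
      unfolding G_def by (rule bounded_linear.has_derivative[OF bounded_linear_scaleR_right Q_der[OF dA]])
    have "(1/2::real) *\<^sub>R (\<Sum>i\<in>UNIV. emul e (z$i) (A h$i) + emul e (h$i) (P z$i))
        = (\<Sum>i\<in>UNIV. emul e (h$i) (P z$i))" for h
    proof -
      have "(\<Sum>i\<in>UNIV. emul e (z$i) (A h$i)) = (\<Sum>i\<in>UNIV. emul e (h$i) (P z$i))"
      proof -
        have s0: "(\<Sum>i\<in>UNIV. emul e (z$i) (A h$i) - emul e (A z$i) (h$i)) = 0" using sym by blast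
        show ?thesis using sym_sum[OF s0] Az by simp
      qed
      thus ?thesis by (simp add: sum.distrib scaleR_2[symmetric])
    qed
    thus ?thesis using d by simp
  qed
  have holo: "eholo e U G" unfolding eholo_def
  proof
    fix z assume z: "z \<in> U"
    have "(\<Sum>i\<in>UNIV. emul e (escale e iunit h $ i) (P z$i)) = emul e iunit (\<Sum>i\<in>UNIV. emul e (h$i) (P z$i))" for h
      by (simp add: emul_sum_right emul_assoc)
    thus "\<exists>D. (G has_derivative D) (at z) \<and> (\<forall>h. D (escale e iunit h) = emul e iunit (D h))"
      using dG[OF z] by blast
  qed
  have part: "\<forall>z\<in>U. \<forall>i. epartial G z i = P z $ i"
  proof (intro ballI allI)
    fix z i assume z: "z \<in> U"
    show "epartial G z i = P z $ i"
      unfolding epartial_def frechet_derivative_at[OF dG[OF z], symmetric]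
      by (rule sum_axis_one)
  qed
  have hom: "ehomogeneous e 2 U G" unfolding ehomogeneous_def
  proof
    fix z assume z: "z \<in> U"
    obtain \<rho> where rho: "\<rho> > 0" and hP: "\<forall>l\<in>ball (1,0) \<rho>. escale e l z \<in> U \<and> P (escale e l z) = escale e l (P z)"
      using P_hom[OF U phi_def phi con z] by blast
    have "escale e l z \<in> U \<and> G (escale e l z) = emul e (epow e l 2) (G z)" if l: "l \<in> ball (1,0) \<rho>" for l
    proof -
      have "G (escale e l z) = (1/2::real) *\<^sub>R (\<Sum>i\<in>UNIV. emul e (emul e l l) (emul e (z$i) (P z$i)))"
        using hP l unfolding G_def by (simp add: emul_swap)
      also have "\<dots> = emul e (epow e l 2) (G z)"
        unfolding G_def epow2 by (simp add: emul_sum_right emul_scaleR_right)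
      finally show ?thesis using hP l by blast
    qed
    thus "\<exists>W. open W \<and> (1,0) \<in> W \<and> (\<forall>l\<in>W. escale e l z \<in> U \<and> G (escale e l z) = emul e (epow e l 2) (G z))"
      using rho by (intro exI[of _ "ball (1,0) \<rho>"]) auto
  qed
  show ?thesis using holo part hom by blast
qed

theorem mainTheorem5:
  fixes eps :: real
    and U :: "((real \<times> real) ^ 'n) set"
    and F :: "(real \<times> real) ^ 'n \<Rightarrow> real \<times> real"
    and phi :: "(real \<times> real) ^ 'n \<Rightarrow> ((real \<times> real) ^ 'n) \<times> ((real \<times> real) ^ 'n)"
  assumes eps: "eps = 1 \<or> eps = -1"
    and U: "open U" "connected U"
    and F: "eholo eps U F"
    and phi_def: "\<forall>z\<in>U. phi z = (z, (\<chi> i. epartial F z i))"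
    and phi: "ekahler_lagrangian_imm eps U phi"
  shows "(\<exists>G. eholo eps U G \<and> (\<forall>z\<in>U. \<forall>i. epartial G z i = epartial F z i)
              \<and> ehomogeneous eps 2 U G) \<longleftrightarrow> conical U phi"
proof -
  define P where "P = (\<lambda>z. (\<chi> i. epartial F z i) :: (real \<times> real) ^ 'n)"
  have pd: "\<And>w. w \<in> U \<Longrightarrow> phi w = (w, P w)" using phi_def unfolding P_def by blast
  have PF: "P z $ i = epartial F z i" for z i unfolding P_def by simp
  show ?thesis
  proof
    assume "\<exists>G. eholo eps U G \<and> (\<forall>z\<in>U. \<forall>i. epartial G z i = epartial F z i) \<and> ehomogeneous eps 2 U G"
    then obtain G where G: "eholo eps U G" and dP: "\<forall>z\<in>U. \<forall>i. epartial G z i = epartial F z i"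
      and hom: "ehomogeneous eps 2 U G" by blast
    have dP': "\<forall>z\<in>U. \<forall>i. epartial G z i = P z $ i" using dP PF by simp
    show "conical U phi" using fwd[OF U(1) pd phi G dP' hom] .
  next
    assume con: "conical U phi"
    from bwd[OF U(1) pd phi con] show "\<exists>G. eholo eps U G \<and> (\<forall>z\<in>U. \<forall>i. epartial G z i = epartial F z i) \<and> ehomogeneous eps 2 U G"
      using PF by auto
  qed
qed


end
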